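(* Consider the bucketing algorithm described in the context, with arbitrary parameters $r\mid d$, $k=d/r$, $\delta$ with $\delta k\in\mathbb Z$, applied (under a fixed coordinate permutation) to a uniformly random instance of $\mathcal{CP}_{d,\lambda,\gamma}$. Let $(A_0,B_0)$ be the root and, for $i=1,\dots,r$, let $(A_i,B_i)$ be the child of $(A_{i-1},B_{i-1})$ obtained from an independent uniform $\vec z_i\in\mathbb F_2^k$. Then with $p=\binom{k}{\delta k}2^{-k}$, \[\mathbb E\big[|A_i|\cdot|B_i|\big]\le \mathbb E\big[|A_{i-1}|\cdot|B_{i-1}|\big]\,p^2+1\quad(i=1,\dots,r),\] and consequently $\mathbb E[|A_r|\cdot|B_r|]\le 2^{2\lambda d}p^{2r}+r$, the expectation being over the input lists and the choices of the $\vec z_i$.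
   Context: $\mathrm{wt}$ is Hamming weight. For $\vec v\in\mathbb F_2^d$ and $I=\{i_1<\dots<i_m\}\subseteq[d]$, $\vec v_I=(v_{i_1},\dots,v_{i_m})$. For $r\mid d$ and $i\in[r]$, the $i$-th block is $B_{i,r}=[(i-1)\frac dr+1,\ i\frac dr]$. Problem $\mathcal{CP}_{d,\lambda,\gamma}$ (uniform version): two lists $L_1=(\vec v_i)_{i\in[2^{\lambda d}]}$, $L_2=(\vec w_i)_{i\in[2^{\lambda d}]}$ of vectors in $\mathbb F_2^d$, all entries independent and uniformly random, except for one planted pair $(\vec x,\vec y)\in L_1\times L_2$ with $\mathrm{wt}(\vec x+\vec y)=\gamma d$; for every $i,j$ the vectors $\vec v_i,\vec w_j$ are independent. Bucketing step of the algorithm: the root node is $(A_0,B_0)=(L_1,L_2)$; a child of a node $(A,B)$ at level $i-1$ determined by $\vec z\in\mathbb F_2^k$ is $(A',B')$ with $A'=\{\vec v\in A:\mathrm{wt}(\vec v_{B_{i,r}}+\vec z)=\delta k\}$ and $B'=\{\vec w\in B:\mathrm{wt}(\vec w_{B_{i,r}}+\vec z)=\delta k\}$. *)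

theory Defs
  imports "HOL-Probability.Probability" "HOL-Combinatorics.Permutations"
begin

text \<open>Vectors in F_2^d are boolean lists of length d; addition is componentwise xor.\<close>

definition vecs :: "nat \<Rightarrow> bool list set" where
  "vecs d = {v. length v = d}"

definition wt :: "bool list \<Rightarrow> nat" where
  "wt v = length (filter id v)"

definition vadd :: "bool list \<Rightarrow> bool list \<Rightarrow> bool list" where
  "vadd u v = map2 (\<noteq>) u v"

text \<open>The i-th block (i >= 1, 0-indexed coordinates (i-1)k,...,ik-1) of the vector v
  after permuting its coordinates by pi.\<close>
definition block_of :: "(nat \<Rightarrow> nat) \<Rightarrow> nat \<Rightarrow> nat \<Rightarrow> bool list \<Rightarrow> bool list" where
  "block_of \<pi> k i v = map (\<lambda>j. v ! \<pi> j) [(i - 1) * k..<i * k]"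

definition uniform_list :: "nat \<Rightarrow> nat \<Rightarrow> bool list list pmf" where
  "uniform_list N d = pmf_of_set {L. length L = N \<and> set L \<subseteq> vecs d}"

text \<open>Random instance of CP_{d,lambda,gamma}: lists of length N = 2^(lambda d), all entries
  uniform and independent, except that the planted pair (L1!i0, L2!j0) satisfies
  L2!j0 = L1!i0 + e with e uniform of weight g = gamma d.\<close>
definition CP_instance :: "nat \<Rightarrow> nat \<Rightarrow> nat \<Rightarrow> nat \<Rightarrow> nat \<Rightarrow> (bool list list \<times> bool list list) pmf" where
  "CP_instance d N g i0 j0 =
     do { L1 \<leftarrow> uniform_list N d;
          L2 \<leftarrow> uniform_list N d;
          e \<leftarrow> pmf_of_set {e \<in> vecs d. wt e = g};
          return_pmf (L1, L2[j0 := vadd (L1 ! i0) e]) }"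

text \<open>Nodes are pairs of index sets into L1 and L2 (so that |A| counts list entries).\<close>
definition child :: "(nat \<Rightarrow> nat) \<Rightarrow> nat \<Rightarrow> nat \<Rightarrow> nat \<Rightarrow> bool list list \<Rightarrow> bool list list
    \<Rightarrow> nat set \<times> nat set \<Rightarrow> bool list \<Rightarrow> nat set \<times> nat set" where
  "child \<pi> k w i L1 L2 AB z =
     ({a \<in> fst AB. wt (vadd (block_of \<pi> k i (L1 ! a)) z) = w},
      {b \<in> snd AB. wt (vadd (block_of \<pi> k i (L2 ! b)) z) = w})"

fun node :: "(nat \<Rightarrow> nat) \<Rightarrow> nat \<Rightarrow> nat \<Rightarrow> bool list list \<Rightarrow> bool list list \<Rightarrow> bool list list
    \<Rightarrow> nat \<Rightarrow> nat set \<times> nat set" where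
  "node \<pi> k w L1 L2 zs 0 = ({..<length L1}, {..<length L2})"
| "node \<pi> k w L1 L2 zs (Suc i) = child \<pi> k w (Suc i) L1 L2 (node \<pi> k w L1 L2 zs i) (zs ! i)"

text \<open>E[|A_i| |B_i|] over the instance and the independent uniform z_1..z_r (zs ! (i-1) = z_i).\<close>
definition expected_prod ::
  "nat \<Rightarrow> nat \<Rightarrow> nat \<Rightarrow> nat \<Rightarrow> nat \<Rightarrow> (nat \<Rightarrow> nat) \<Rightarrow> nat \<Rightarrow> nat \<Rightarrow> nat \<Rightarrow> nat \<Rightarrow> real" where
  "expected_prod d N g i0 j0 \<pi> k w r i =
     measure_pmf.expectation (pair_pmf (CP_instance d N g i0 j0) (uniform_list r k))
       (\<lambda>((L1, L2), zs). real (card (fst (node \<pi> k w L1 L2 zs i)) * card (snd (node \<pi> k w L1 L2 zs i))))"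

end

theory Submission
  imports Defs
begin


lemma pmf_of_set_times:
  assumes "finite A" "A \<noteq> {}" "finite B" "B \<noteq> {}"
  shows "pmf_of_set (A \<times> B) = pair_pmf (pmf_of_set A) (pmf_of_set B)"
proof (rule pmf_eqI)
  fix x :: "'a \<times> 'b" obtain a b where x: "x = (a,b)" by (cases x)
  show "pmf (pmf_of_set (A \<times> B)) x = pmf (pair_pmf (pmf_of_set A) (pmf_of_set B)) x"
  proof -
    have 1: "pmf (pmf_of_set (A \<times> B)) (a,b) = indicator (A \<times> B) (a,b) / card (A \<times> B)"
      by (rule pmf_of_set) (use assms in auto)
    have 2: "pmf (pmf_of_set A) a = indicator A a / card A" by (rule pmf_of_set) (use assms in auto)
    have 3: "pmf (pmf_of_set B) b = indicator B b / card B" by (rule pmf_of_set) (use assms in auto)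
    show ?thesis unfolding x pmf_pair 1 2 3 card_cartesian_product
      by (cases "a \<in> A"; cases "b \<in> B") (simp_all add: indicator_def)
  qed
qed

lemma length_vadd[simp]: "length (vadd u v) = min (length u) (length v)"
  by (simp add: vadd_def)

lemma nth_vadd[simp]: "j < length u \<Longrightarrow> j < length v \<Longrightarrow> vadd u v ! j = (u ! j \<noteq> v ! j)"
  by (simp add: vadd_def)

lemma vadd_cancel: "length x = length s \<Longrightarrow> vadd (vadd x s) s = x"
  by (rule nth_equalityI) auto

lemma vadd_cancel2: "length x = length s \<Longrightarrow> vadd x (vadd x s) = s"
  by (rule nth_equalityI) auto

lemma vadd_swap: "length x = length s \<Longrightarrow> length x = length e \<Longrightarrow> vadd (vadd x s) e = vadd (vadd x e) s"
  by (rule nth_equalityI) auto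

lemma length_block_of[simp]: "0 < i \<Longrightarrow> length (block_of \<pi> k i v) = k"
proof -
  assume "0 < i" then obtain i' where "i = Suc i'" by (cases i) auto
  thus ?thesis by (simp add: block_of_def)
qed

lemma card_vecs: "card (vecs k) = 2 ^ k"
proof -
  have "vecs k = {xs. set xs \<subseteq> UNIV \<and> length xs = k}" by (auto simp: vecs_def)
  thus ?thesis using card_lists_length_eq[of "UNIV::bool set" k] by simp
qed

lemma finite_vecs[simp]: "finite (vecs k)"
proof -
  have "vecs k = {xs. set xs \<subseteq> UNIV \<and> length xs = k}" by (auto simp: vecs_def)
  thus ?thesis using finite_lists_length_eq[of "UNIV::bool set" k] by simp
qed

lemma card_wt: "card {f \<in> vecs k. wt f = w} = k choose w"
proof -
  have "bij_betw (\<lambda>f. {j. j < k \<and> f ! j}) {f \<in> vecs k. wt f = w} {B. B \<subseteq> {..<k} \<and> card B = w}"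
  proof (rule bij_betw_byWitness[where f' = "\<lambda>B. map (\<lambda>j. j \<in> B) [0..<k]"])
    show "\<forall>a\<in>{f \<in> vecs k. wt f = w}. map (\<lambda>j. j \<in> {j. j < k \<and> a ! j}) [0..<k] = a"
    proof
      fix a assume "a \<in> {f \<in> vecs k. wt f = w}"
      hence "length a = k" by (simp add: vecs_def)
      thus "map (\<lambda>j. j \<in> {j. j < k \<and> a ! j}) [0..<k] = a"
        by (intro nth_equalityI) simp_all
    qed
    show "\<forall>a'\<in>{B. B \<subseteq> {..<k} \<and> card B = w}. {j. j < k \<and> map (\<lambda>j. j \<in> a') [0..<k] ! j} = a'"
      by auto
    show "(\<lambda>f. {j. j < k \<and> f ! j}) ` {f \<in> vecs k. wt f = w} \<subseteq> {B. B \<subseteq> {..<k} \<and> card B = w}"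
    proof
      fix B assume "B \<in> (\<lambda>f. {j. j < k \<and> f ! j}) ` {f \<in> vecs k. wt f = w}"
      then obtain f where f: "f \<in> vecs k" "wt f = w" "B = {j. j < k \<and> f ! j}" by auto
      have lf: "length f = k" using f(1) by (simp add: vecs_def)
      have "B \<subseteq> {..<k}" using f(3) by auto
      moreover have "wt f = card {j. j < length f \<and> id (f ! j)}" unfolding wt_def
        by (rule length_filter_conv_card)
      hence "card B = w" using f(2,3) lf by simp
      ultimately show "B \<in> {B. B \<subseteq> {..<k} \<and> card B = w}" by blast
    qed
    show "(\<lambda>B. map (\<lambda>j. j \<in> B) [0..<k]) ` {B. B \<subseteq> {..<k} \<and> card B = w} \<subseteq> {f \<in> vecs k. wt f = w}"
    proof
      fix f assume "f \<in> (\<lambda>B. map (\<lambda>j. j \<in> B) [0..<k]) ` {B. B \<subseteq> {..<k} \<and> card B = w}"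
      then obtain B where B: "B \<subseteq> {..<k}" "card B = w" "f = map (\<lambda>j. j \<in> B) [0..<k]" by auto
      have lf: "length f = k" using B(3) by simp
      have "wt f = card {j. j < length f \<and> id (f ! j)}" unfolding wt_def
        by (rule length_filter_conv_card)
      also have "{j. j < length f \<and> id (f ! j)} = B" using B(1) B(3) by auto
      finally show "f \<in> {f \<in> vecs k. wt f = w}" using lf B(2) by (simp add: vecs_def)
    qed
  qed
  hence "card {f \<in> vecs k. wt f = w} = card {B. B \<subseteq> {..<k} \<and> card B = w}" by (rule bij_betw_same_card)
  also have "\<dots> = k choose w" using n_subsets[of "{..<k}" w] by simp
  finally show ?thesis .
qed

lemma card_wt_shift: assumes "h \<in> vecs k" shows "card {f \<in> vecs k. wt (vadd f h) = w} = k choose w"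
proof -
  have lh: "length h = k" using assms by (simp add: vecs_def)
  have "bij_betw (\<lambda>f. vadd f h) {f \<in> vecs k. wt (vadd f h) = w} {f \<in> vecs k. wt f = w}"
  proof (rule bij_betw_byWitness[where f' = "\<lambda>f. vadd f h"])
    show "\<forall>a\<in>{f \<in> vecs k. wt (vadd f h) = w}. vadd (vadd a h) h = a"
      using lh by (simp add: vecs_def vadd_cancel)
    show "\<forall>a\<in>{f \<in> vecs k. wt f = w}. vadd (vadd a h) h = a"
      using lh by (simp add: vecs_def vadd_cancel)
    show "(\<lambda>f. vadd f h) ` {f \<in> vecs k. wt (vadd f h) = w} \<subseteq> {f \<in> vecs k. wt f = w}"
    proof (rule image_subsetI)
      fix f assume "f \<in> {f \<in> vecs k. wt (vadd f h) = w}"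
      hence f: "length f = k" "wt (vadd f h) = w" unfolding vecs_def by simp_all
      have "length (vadd f h) = k" using f(1) lh by simp
      thus "vadd f h \<in> {f \<in> vecs k. wt f = w}" using f(2) unfolding vecs_def by simp
    qed
    show "(\<lambda>f. vadd f h) ` {f \<in> vecs k. wt f = w} \<subseteq> {f \<in> vecs k. wt (vadd f h) = w}"
    proof (rule image_subsetI)
      fix f assume "f \<in> {f \<in> vecs k. wt f = w}"
      hence f: "length f = k" "wt f = w" unfolding vecs_def by simp_all
      have 1: "length (vadd f h) = k" using f(1) lh by simp
      have 2: "vadd (vadd f h) h = f" using f(1) lh by (intro vadd_cancel) simp
      show "vadd f h \<in> {f \<in> vecs k. wt (vadd f h) = w}" unfolding vecs_def mem_Collect_eq 2
        using 1 f(2) by simp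
    qed
  qed
  from bij_betw_same_card[OF this] card_wt[of k w] show ?thesis by simp
qed



definition spread :: "(nat \<Rightarrow> nat) \<Rightarrow> nat \<Rightarrow> nat \<Rightarrow> nat \<Rightarrow> bool list \<Rightarrow> bool list" where
  "spread \<pi> d k i u = map (\<lambda>j. (i-1)*k \<le> inv \<pi> j \<and> inv \<pi> j < i*k \<and> u ! (inv \<pi> j - (i-1)*k)) [0..<d]"

lemma length_spread[simp]: "length (spread \<pi> d k i u) = d"
  by (simp add: spread_def)

lemma nth_block_of:
  assumes "0 < l" "j < k"
  shows "block_of \<pi> k l v ! j = v ! \<pi> ((l-1)*k + j)"
proof -
  obtain l' where l: "l = Suc l'" using assms by (cases l) auto
  show ?thesis using assms(2) unfolding l block_of_def by (simp add: nth_upt)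
qed

lemma spread_at:
  assumes p: "\<pi> permutes {..<d}" and m: "m < d"
  shows "spread \<pi> d k i u ! (\<pi> m) = ((i-1)*k \<le> m \<and> m < i*k \<and> u ! (m - (i-1)*k))"
proof -
  have "\<pi> m < d" using permutes_in_image[OF p] m by simp
  moreover have "inv \<pi> (\<pi> m) = m" using permutes_inverses(2)[OF p] by simp
  ultimately show ?thesis by (simp add: spread_def)
qed

lemma block_shift_same:
  assumes p: "\<pi> permutes {..<d}" and i: "0 < i" "i*k \<le> d" and lv: "length v = d" and lu: "length u = k"
  shows "block_of \<pi> k i (vadd v (spread \<pi> d k i u)) = vadd (block_of \<pi> k i v) u"
proof (rule nth_equalityI)
  show "length (block_of \<pi> k i (vadd v (spread \<pi> d k i u))) = length (vadd (block_of \<pi> k i v) u)"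
    using i lu by simp
  fix j assume "j < length (block_of \<pi> k i (vadd v (spread \<pi> d k i u)))"
  hence j: "j < k" using i by simp
  have ik: "i*k = (i-1)*k + k" using i by (cases i) auto
  define m where "m = (i-1)*k + j"
  have md: "m < d" using j ik i unfolding m_def by linarith
  have pm: "\<pi> m < d" using permutes_in_image[OF p] md by simp
  have "block_of \<pi> k i (vadd v (spread \<pi> d k i u)) ! j = (v ! \<pi> m \<noteq> spread \<pi> d k i u ! \<pi> m)"
    using nth_block_of[OF i(1) j] pm lv unfolding m_def by simp
  also have "\<dots> = (v ! \<pi> m \<noteq> u ! j)" using spread_at[OF p md] ik j unfolding m_def by simp
  also have "\<dots> = vadd (block_of \<pi> k i v) u ! j"
    using nth_block_of[OF i(1) j] lu j i unfolding m_def by simp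
  finally show "block_of \<pi> k i (vadd v (spread \<pi> d k i u)) ! j = vadd (block_of \<pi> k i v) u ! j" .
qed

lemma block_shift_other:
  assumes p: "\<pi> permutes {..<d}" and l: "0 < l" "l*k \<le> d" "l \<noteq> i" "0 < i" and lv: "length v = d"
  shows "block_of \<pi> k l (vadd v (spread \<pi> d k i u)) = block_of \<pi> k l v"
proof (rule nth_equalityI)
  show "length (block_of \<pi> k l (vadd v (spread \<pi> d k i u))) = length (block_of \<pi> k l v)"
    using l by simp
  fix j assume "j < length (block_of \<pi> k l (vadd v (spread \<pi> d k i u)))"
  hence j: "j < k" using l by simp
  have lk: "l*k = (l-1)*k + k" using l by (cases l) auto
  have ik: "i*k = (i-1)*k + k" using l by (cases i) auto
  define m where "m = (l-1)*k + j"
  have md: "m < d" using j lk l unfolding m_def by linarith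
  have pm: "\<pi> m < d" using permutes_in_image[OF p] md by simp
  have notin: "\<not> ((i-1)*k \<le> m \<and> m < i*k)"
  proof (cases "l < i")
    case True
    hence "l*k \<le> (i-1)*k" by (intro mult_le_mono1) linarith
    thus ?thesis using lk j unfolding m_def by linarith
  next
    case False
    hence "i*k \<le> (l-1)*k" using l by (intro mult_le_mono1) linarith
    thus ?thesis unfolding m_def by linarith
  qed
  have "block_of \<pi> k l (vadd v (spread \<pi> d k i u)) ! j = (v ! \<pi> m \<noteq> spread \<pi> d k i u ! \<pi> m)"
    using nth_block_of[OF l(1) j] pm lv unfolding m_def by simp
  also have "\<dots> = v ! \<pi> m" using spread_at[OF p md, of k i u] notin by auto
  also have "\<dots> = block_of \<pi> k l v ! j" using nth_block_of[OF l(1) j] unfolding m_def by simp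
  finally show "block_of \<pi> k l (vadd v (spread \<pi> d k i u)) ! j = block_of \<pi> k l v ! j" .
qed

definition pass :: "(nat \<Rightarrow> nat) \<Rightarrow> nat \<Rightarrow> nat \<Rightarrow> nat \<Rightarrow> bool list \<Rightarrow> bool list list \<Rightarrow> bool" where
  "pass \<pi> k w l v zs = (wt (vadd (block_of \<pi> k l v) (zs ! (l-1))) = w)"

lemma node_char:
  "node \<pi> k w L1 L2 zs i =
    ({a \<in> {..<length L1}. \<forall>l\<in>{1..i}. pass \<pi> k w l (L1!a) zs},
     {b \<in> {..<length L2}. \<forall>l\<in>{1..i}. pass \<pi> k w l (L2!b) zs})"
proof (induction i)
  case 0 thus ?case by (auto simp: lessThan_def)
next
  case (Suc i)
  have e: "{1..Suc i} = insert (Suc i) {1..i}" by auto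
  have P: "\<And>v. (wt (vadd (block_of \<pi> k (Suc i) v) (zs ! i)) = w) = pass \<pi> k w (Suc i) v zs"
    by (simp add: pass_def)
  show ?case unfolding node.simps Suc.IH child_def P fst_conv snd_conv e by auto
qed



lemma vadd_cancel3: "length x = length y \<Longrightarrow> vadd y (vadd x y) = x"
  by (rule nth_equalityI) auto

lemma inv_card:
  assumes "finite A" "finite B" "\<And>x. x \<in> A \<Longrightarrow> S x \<in> B" "\<And>x. x \<in> B \<Longrightarrow> S x \<in> A"
    "\<And>x. x \<in> A \<Longrightarrow> S (S x) = x" "\<And>x. x \<in> B \<Longrightarrow> S (S x) = x"
  shows "card A = card B"
proof (rule antisym)
  have "inj_on S A" by (rule inj_on_inverseI[where g = S]) (use assms in auto)
  thus "card A \<le> card B" by (rule card_inj_on_le) (use assms in auto)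
  have "inj_on S B" by (rule inj_on_inverseI[where g = S]) (use assms in auto)
  thus "card B \<le> card A" by (rule card_inj_on_le) (use assms in auto)
qed

lemma fiber_count:
  fixes E :: "'o set" and fb :: "'o \<Rightarrow> 't" and K :: "'t set"
  assumes fin: "finite E" "finite K" and img: "fb ` E \<subseteq> K"
    and eq: "\<And>t t'. t \<in> K \<Longrightarrow> t' \<in> K \<Longrightarrow> card {\<omega>\<in>E. fb \<omega> = t} = card {\<omega>\<in>E. fb \<omega> = t'}"
    and G: "G \<subseteq> K"
  shows "card {\<omega>\<in>E. fb \<omega> \<in> G} * card K = card E * card G"
proof (cases "K = {}")
  case True
  hence "E = {}" "G = {}" using img G by auto
  thus ?thesis by simp
next
  case False
  then obtain t0 where t0: "t0 \<in> K" by auto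
  define n where "n = card {\<omega>\<in>E. fb \<omega> = t0}"
  have cH: "card {\<omega>\<in>E. fb \<omega> \<in> H} = card H * n" if H: "H \<subseteq> K" for H
  proof -
    have finH: "finite H" using H fin(2) finite_subset by blast
    have U: "{\<omega>\<in>E. fb \<omega> \<in> H} = (\<Union>t\<in>H. {\<omega>\<in>E. fb \<omega> = t})" by auto
    have "card {\<omega>\<in>E. fb \<omega> \<in> H} = card (\<Union>t\<in>H. {\<omega>\<in>E. fb \<omega> = t})"
      by (rule arg_cong[OF U])
    also have "\<dots> = (\<Sum>t\<in>H. card {\<omega>\<in>E. fb \<omega> = t})"
      by (rule card_UN_disjoint) (use finH fin(1) in auto)
    also have "\<dots> = (\<Sum>t\<in>H. n)" unfolding n_def
    proof (rule sum.cong[OF refl])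
      fix x assume "x \<in> H"
      thus "card {\<omega>\<in>E. fb \<omega> = x} = card {\<omega>\<in>E. fb \<omega> = t0}" by (rule eq[OF subsetD[OF H] t0])
    qed
    finally show ?thesis by simp
  qed
  have "E = {\<omega>\<in>E. fb \<omega> \<in> K}" using img by auto
  hence "card E = card K * n" using cH[of K] by (simp only:)
  thus ?thesis using cH[OF G] by simp
qed

lemma card_G:
  "card {t \<in> vecs k \<times> vecs k \<times> vecs k. wt (vadd (fst t) (snd (snd t))) = w \<and> wt (vadd (fst (snd t)) (snd (snd t))) = w}
    = 2 ^ k * (k choose w) ^ 2"
proof -
  define A where "A h = {f \<in> vecs k. wt (vadd f h) = w}" for h
  have "{t \<in> vecs k \<times> vecs k \<times> vecs k. wt (vadd (fst t) (snd (snd t))) = w \<and> wt (vadd (fst (snd t)) (snd (snd t))) = w}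
     = (\<lambda>(h, f, g). (f, g, h)) ` (SIGMA h:vecs k. A h \<times> A h)"
  proof (rule set_eqI)
    fix t :: "bool list \<times> bool list \<times> bool list"
    obtain f g h where t: "t = (f, g, h)" by (cases t) auto
    have "t \<in> (\<lambda>(h, f, g). (f, g, h)) ` (SIGMA h:vecs k. A h \<times> A h) \<longleftrightarrow> (h, f, g) \<in> (SIGMA h:vecs k. A h \<times> A h)"
    proof
      assume "(h, f, g) \<in> (SIGMA h:vecs k. A h \<times> A h)"
      thus "t \<in> (\<lambda>(h, f, g). (f, g, h)) ` (SIGMA h:vecs k. A h \<times> A h)"
        unfolding t by (rule image_eqI[rotated]) simp
    next
      assume "t \<in> (\<lambda>(h, f, g). (f, g, h)) ` (SIGMA h:vecs k. A h \<times> A h)"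
      then obtain y where y: "y \<in> (SIGMA h:vecs k. A h \<times> A h)" "t = (\<lambda>(h, f, g). (f, g, h)) y" by blast
      obtain h' f' g' where yy: "y = (h', f', g')" by (cases y) auto
      show "(h, f, g) \<in> (SIGMA h:vecs k. A h \<times> A h)" using y unfolding yy t by simp
    qed
    thus "t \<in> {t \<in> vecs k \<times> vecs k \<times> vecs k. wt (vadd (fst t) (snd (snd t))) = w \<and> wt (vadd (fst (snd t)) (snd (snd t))) = w}
      \<longleftrightarrow> t \<in> (\<lambda>(h, f, g). (f, g, h)) ` (SIGMA h:vecs k. A h \<times> A h)"
      unfolding t A_def by auto
  qed
  moreover have "inj_on (\<lambda>(h, f, g). (f, g, h)) (SIGMA h:vecs k. A h \<times> A h)"
    by (auto simp: inj_on_def)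
  moreover have "card (SIGMA h:vecs k. A h \<times> A h) = (\<Sum>h\<in>vecs k. card (A h) * card (A h))"
    by (simp add: A_def card_cartesian_product)
  moreover have "\<dots> = (\<Sum>h\<in>vecs k. (k choose w) ^ 2)"
    by (rule sum.cong) (simp_all add: A_def card_wt_shift power2_eq_square)
  ultimately show ?thesis by (simp add: card_image card_vecs)
qed

lemma core:
  fixes \<Omega> :: "'o set" and X Y :: "'o \<Rightarrow> bool list" and Zs :: "'o \<Rightarrow> bool list list"
    and T :: "bool list \<Rightarrow> bool list \<Rightarrow> bool list \<Rightarrow> 'o \<Rightarrow> 'o"
  assumes p: "\<pi> permutes {..<d}" and i: "0 < i" "i \<le> r" and rk: "r * k \<le> d" and fin: "finite \<Omega>"
    and lens: "\<And>\<omega>. \<omega> \<in> \<Omega> \<Longrightarrow> length (X \<omega>) = d \<and> length (Y \<omega>) = d \<and> length (Zs \<omega>) = r \<and> set (Zs \<omega>) \<subseteq> vecs k"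
    and T: "\<And>u v s \<omega>. u \<in> vecs k \<Longrightarrow> v \<in> vecs k \<Longrightarrow> s \<in> vecs k \<Longrightarrow> \<omega> \<in> \<Omega> \<Longrightarrow>
        T u v s \<omega> \<in> \<Omega> \<and> T u v s (T u v s \<omega>) = \<omega> \<and>
        X (T u v s \<omega>) = vadd (X \<omega>) (spread \<pi> d k i u) \<and>
        Y (T u v s \<omega>) = vadd (Y \<omega>) (spread \<pi> d k i v) \<and>
        Zs (T u v s \<omega>) = (Zs \<omega>)[i-1 := vadd (Zs \<omega> ! (i-1)) s]"
  shows "card {\<omega>\<in>\<Omega>. \<forall>l\<in>{1..i}. pass \<pi> k w l (X \<omega>) (Zs \<omega>) \<and> pass \<pi> k w l (Y \<omega>) (Zs \<omega>)} * 2 ^ (2*k)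
       = card {\<omega>\<in>\<Omega>. \<forall>l\<in>{1..i-1}. pass \<pi> k w l (X \<omega>) (Zs \<omega>) \<and> pass \<pi> k w l (Y \<omega>) (Zs \<omega>)} * (k choose w) ^ 2"
proof -
  define Ev where "Ev = {\<omega>\<in>\<Omega>. \<forall>l\<in>{1..i-1}. pass \<pi> k w l (X \<omega>) (Zs \<omega>) \<and> pass \<pi> k w l (Y \<omega>) (Zs \<omega>)}"
  define K where "K = vecs k \<times> vecs k \<times> vecs k"
  define fb where "fb \<omega> = (block_of \<pi> k i (X \<omega>), block_of \<pi> k i (Y \<omega>), Zs \<omega> ! (i-1))" for \<omega>
  define G where "G = {t \<in> vecs k \<times> vecs k \<times> vecs k. wt (vadd (fst t) (snd (snd t))) = w \<and> wt (vadd (fst (snd t)) (snd (snd t))) = w}"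
  have ik: "i * k \<le> d" using i rk by (meson le_trans mult_le_mono1)
  have i1: "i - 1 < r" using i by simp
  have fbK: "fb \<omega> \<in> K" if "\<omega> \<in> \<Omega>" for \<omega>
  proof -
    have "Zs \<omega> ! (i-1) \<in> set (Zs \<omega>)" using lens[OF that] i1 by simp
    hence "Zs \<omega> ! (i-1) \<in> vecs k" using lens[OF that] by blast
    thus ?thesis using i unfolding fb_def K_def by (simp add: vecs_def)
  qed
  have finEv: "finite Ev" using fin unfolding Ev_def by simp
  have pres: "T u v s \<omega> \<in> Ev \<and> fb (T u v s \<omega>) =
        (vadd (block_of \<pi> k i (X \<omega>)) u, vadd (block_of \<pi> k i (Y \<omega>)) v, vadd (Zs \<omega> ! (i-1)) s)"
    if uvs: "u \<in> vecs k" "v \<in> vecs k" "s \<in> vecs k" and \<omega>: "\<omega> \<in> Ev" for u v s \<omega>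
  proof -
    have \<omega>\<Omega>: "\<omega> \<in> \<Omega>" using \<omega> unfolding Ev_def by simp
    note Tw = T[OF uvs \<omega>\<Omega>]
    note L = lens[OF \<omega>\<Omega>]
    have "pass \<pi> k w l (X (T u v s \<omega>)) (Zs (T u v s \<omega>)) = pass \<pi> k w l (X \<omega>) (Zs \<omega>) \<and>
          pass \<pi> k w l (Y (T u v s \<omega>)) (Zs (T u v s \<omega>)) = pass \<pi> k w l (Y \<omega>) (Zs \<omega>)"
      if l: "l \<in> {1..i-1}" for l
    proof -
      have l0: "0 < l" "l \<noteq> i" using l by auto
      have lk: "l * k \<le> d" using l i rk by (meson atLeastAtMost_iff diff_le_self le_trans mult_le_mono1)
      have zz: "Zs (T u v s \<omega>) = (Zs \<omega>)[i-1 := vadd (Zs \<omega> ! (i-1)) s]" using Tw by blast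
      have "l - 1 \<noteq> i - 1" using l i by auto
      hence z: "Zs (T u v s \<omega>) ! (l-1) = Zs \<omega> ! (l-1)" unfolding zz by simp
      show ?thesis unfolding pass_def z using Tw L
        block_shift_other[OF p l0(1) lk l0(2) i(1), of "X \<omega>" u]
        block_shift_other[OF p l0(1) lk l0(2) i(1), of "Y \<omega>" v] by simp
    qed
    hence "\<forall>l\<in>{1..i-1}. pass \<pi> k w l (X (T u v s \<omega>)) (Zs (T u v s \<omega>)) \<and> pass \<pi> k w l (Y (T u v s \<omega>)) (Zs (T u v s \<omega>))"
      using \<omega> unfolding Ev_def by simp
    hence "T u v s \<omega> \<in> Ev" using Tw unfolding Ev_def by blast
    moreover have "fb (T u v s \<omega>) =
        (vadd (block_of \<pi> k i (X \<omega>)) u, vadd (block_of \<pi> k i (Y \<omega>)) v, vadd (Zs \<omega> ! (i-1)) s)"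
    proof -
      have lu: "length u = k" "length v = k" using uvs by (simp_all add: vecs_def)
      show ?thesis unfolding fb_def using Tw L i1
        block_shift_same[OF p i(1) ik _ lu(1), of "X \<omega>"]
        block_shift_same[OF p i(1) ik _ lu(2), of "Y \<omega>"] by simp
    qed
    ultimately show ?thesis by simp
  qed
  have eq: "card {\<omega>\<in>Ev. fb \<omega> = t} = card {\<omega>\<in>Ev. fb \<omega> = t'}" if t: "t \<in> K" "t' \<in> K" for t t'
  proof -
    obtain f g h where tt: "t = (f, g, h)" by (cases t) auto
    obtain f' g' h' where tt': "t' = (f', g', h')" by (cases t') auto
    have V: "f \<in> vecs k" "g \<in> vecs k" "h \<in> vecs k" "f' \<in> vecs k" "g' \<in> vecs k" "h' \<in> vecs k"
      using t unfolding tt tt' K_def by auto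
    hence Ln: "length f = k" "length g = k" "length h = k" "length f' = k" "length g' = k" "length h' = k"
      by (simp_all add: vecs_def)
    define u where "u = vadd f f'"
    define v where "v = vadd g g'"
    define s where "s = vadd h h'"
    have uvs: "u \<in> vecs k" "v \<in> vecs k" "s \<in> vecs k" unfolding u_def v_def s_def using Ln by (simp_all add: vecs_def)
    show ?thesis
    proof (rule inv_card[where S = "T u v s"])
      show "finite {\<omega>\<in>Ev. fb \<omega> = t}" "finite {\<omega>\<in>Ev. fb \<omega> = t'}" using finEv by simp_all
      fix x
      show "x \<in> {\<omega>\<in>Ev. fb \<omega> = t} \<Longrightarrow> T u v s x \<in> {\<omega>\<in>Ev. fb \<omega> = t'}"
      proof -
        assume "x \<in> {\<omega>\<in>Ev. fb \<omega> = t}"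
        hence x: "x \<in> Ev" "block_of \<pi> k i (X x) = f" "block_of \<pi> k i (Y x) = g" "Zs x ! (i-1) = h"
          unfolding tt fb_def by simp_all
        have "fb (T u v s x) = (vadd f (vadd f f'), vadd g (vadd g g'), vadd h (vadd h h'))"
          using pres[OF uvs x(1)] unfolding x(2,3,4) u_def v_def s_def by simp
        also have "\<dots> = t'" unfolding tt' using Ln by (simp add: vadd_cancel2)
        finally show ?thesis using pres[OF uvs x(1)] by simp
      qed
      show "x \<in> {\<omega>\<in>Ev. fb \<omega> = t'} \<Longrightarrow> T u v s x \<in> {\<omega>\<in>Ev. fb \<omega> = t}"
      proof -
        assume "x \<in> {\<omega>\<in>Ev. fb \<omega> = t'}"
        hence x: "x \<in> Ev" "block_of \<pi> k i (X x) = f'" "block_of \<pi> k i (Y x) = g'" "Zs x ! (i-1) = h'"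
          unfolding tt' fb_def by simp_all
        have "fb (T u v s x) = (vadd f' (vadd f f'), vadd g' (vadd g g'), vadd h' (vadd h h'))"
          using pres[OF uvs x(1)] unfolding x(2,3,4) u_def v_def s_def by simp
        also have "\<dots> = t" unfolding tt using Ln by (simp add: vadd_cancel3)
        finally show ?thesis using pres[OF uvs x(1)] by simp
      qed
      show "x \<in> {\<omega>\<in>Ev. fb \<omega> = t} \<Longrightarrow> T u v s (T u v s x) = x"
        using T[OF uvs, of x] unfolding Ev_def by blast
      show "x \<in> {\<omega>\<in>Ev. fb \<omega> = t'} \<Longrightarrow> T u v s (T u v s x) = x"
        using T[OF uvs, of x] unfolding Ev_def by blast
    qed
  qed
  have GK: "G \<subseteq> K" unfolding G_def K_def by auto
  have img: "fb ` Ev \<subseteq> K" using fbK unfolding Ev_def by auto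
  have FC: "card {\<omega>\<in>Ev. fb \<omega> \<in> G} * card K = card Ev * card G"
    by (rule fiber_count[OF finEv _ img eq GK]) (simp add: K_def)
  have iset: "{1..i} = insert i {1..i-1}" using i by auto
  have "{\<omega>\<in>\<Omega>. \<forall>l\<in>{1..i}. pass \<pi> k w l (X \<omega>) (Zs \<omega>) \<and> pass \<pi> k w l (Y \<omega>) (Zs \<omega>)} = {\<omega>\<in>Ev. fb \<omega> \<in> G}"
  proof (rule set_eqI)
    fix \<omega>
    have pX: "pass \<pi> k w i (X \<omega>) (Zs \<omega>) = (wt (vadd (block_of \<pi> k i (X \<omega>)) (Zs \<omega> ! (i-1))) = w)"
      by (simp add: pass_def)
    have pY: "pass \<pi> k w i (Y \<omega>) (Zs \<omega>) = (wt (vadd (block_of \<pi> k i (Y \<omega>)) (Zs \<omega> ! (i-1))) = w)"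
      by (simp add: pass_def)
    have "\<omega> \<in> \<Omega> \<Longrightarrow> fb \<omega> \<in> vecs k \<times> vecs k \<times> vecs k" using fbK unfolding K_def by blast
    thus "(\<omega> \<in> {\<omega>\<in>\<Omega>. \<forall>l\<in>{1..i}. pass \<pi> k w l (X \<omega>) (Zs \<omega>) \<and> pass \<pi> k w l (Y \<omega>) (Zs \<omega>)}) = (\<omega> \<in> {\<omega>\<in>Ev. fb \<omega> \<in> G})"
      apply (simp only: Ev_def G_def iset mem_Collect_eq fb_def fst_conv snd_conv)
      using pX pY by blast
  qed
  moreover have "card K = 2^k * 2^(2*k)"
  proof -
    have "card K = 2^k * (2^k * 2^k)" unfolding K_def by (simp add: card_cartesian_product card_vecs)
    moreover have "(2::nat)^(2*k) = 2^k * 2^k" by (simp add: mult_2 power_add)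
    ultimately show ?thesis by simp
  qed
  moreover have "card G = 2^k * (k choose w)^2" unfolding G_def by (rule card_G)
  ultimately have "card {\<omega>\<in>\<Omega>. \<forall>l\<in>{1..i}. pass \<pi> k w l (X \<omega>) (Zs \<omega>) \<and> pass \<pi> k w l (Y \<omega>) (Zs \<omega>)} * (2^k * 2^(2*k))
     = card Ev * (2^k * (k choose w)^2)" using FC by (simp only:)
  hence "2^k * (card {\<omega>\<in>\<Omega>. \<forall>l\<in>{1..i}. pass \<pi> k w l (X \<omega>) (Zs \<omega>) \<and> pass \<pi> k w l (Y \<omega>) (Zs \<omega>)} * 2^(2*k))
     = 2^k * (card Ev * (k choose w)^2)" by (simp only: mult.assoc mult.left_commute)
  thus ?thesis unfolding Ev_def by simp
qed



type_synonym om = "bool list list \<times> bool list list \<times> bool list \<times> bool list list"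

definition OM :: "nat \<Rightarrow> nat \<Rightarrow> nat \<Rightarrow> nat \<Rightarrow> nat \<Rightarrow> om set" where
  "OM N d g r k = {L. length L = N \<and> set L \<subseteq> vecs d} \<times> {L. length L = N \<and> set L \<subseteq> vecs d}
      \<times> {e \<in> vecs d. wt e = g} \<times> {L. length L = r \<and> set L \<subseteq> vecs k}"

definition Xf :: "nat \<Rightarrow> om \<Rightarrow> bool list" where "Xf a \<omega> = fst \<omega> ! a"
definition Yf :: "nat \<Rightarrow> nat \<Rightarrow> nat \<Rightarrow> om \<Rightarrow> bool list" where
  "Yf i0 j0 b \<omega> = (fst (snd \<omega>))[j0 := vadd (fst \<omega> ! i0) (fst (snd (snd \<omega>)))] ! b"
definition Zf :: "om \<Rightarrow> bool list list" where "Zf \<omega> = snd (snd (snd \<omega>))"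

definition T1 :: "(nat \<Rightarrow> nat) \<Rightarrow> nat \<Rightarrow> nat \<Rightarrow> nat \<Rightarrow> nat \<Rightarrow> nat \<Rightarrow> bool list \<Rightarrow> bool list \<Rightarrow> bool list \<Rightarrow> om \<Rightarrow> om" where
  "T1 \<pi> d k i a b u v s \<omega> = (case \<omega> of (L1, L2, e, zs) \<Rightarrow>
     (L1[a := vadd (L1 ! a) (spread \<pi> d k i u)], L2[b := vadd (L2 ! b) (spread \<pi> d k i v)], e,
      zs[i-1 := vadd (zs ! (i-1)) s]))"

definition T2 :: "(nat \<Rightarrow> nat) \<Rightarrow> nat \<Rightarrow> nat \<Rightarrow> nat \<Rightarrow> nat \<Rightarrow> nat \<Rightarrow> bool list \<Rightarrow> bool list \<Rightarrow> bool list \<Rightarrow> om \<Rightarrow> om" where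
  "T2 \<pi> d k i a i0 u v s \<omega> = (case \<omega> of (L1, L2, e, zs) \<Rightarrow>
     (L1[a := vadd (L1 ! a) (spread \<pi> d k i u), i0 := vadd (L1 ! i0) (spread \<pi> d k i v)], L2, e,
      zs[i-1 := vadd (zs ! (i-1)) s]))"

lemma nth_in_vecs: assumes s: "set L \<subseteq> vecs d" and a: "a < length L" shows "length (L ! a) = d"
proof -
  have "L ! a \<in> vecs d" using s nth_mem[OF a] by blast
  thus ?thesis by (simp add: vecs_def)
qed

lemma set_update_vecs: "set L \<subseteq> vecs d \<Longrightarrow> length x = d \<Longrightarrow> set (L[a := x]) \<subseteq> vecs d"
  using set_update_subset_insert[of L a x] by (auto simp: vecs_def)

lemma T1_props:
  assumes \<omega>: "\<omega> \<in> OM N d g r k" and ab: "a < N" "b < N" "b \<noteq> j0" and i: "0 < i" "i \<le> r"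
    and uvs: "u \<in> vecs k" "v \<in> vecs k" "s \<in> vecs k"
  shows "T1 \<pi> d k i a b u v s \<omega> \<in> OM N d g r k \<and> T1 \<pi> d k i a b u v s (T1 \<pi> d k i a b u v s \<omega>) = \<omega> \<and>
        Xf a (T1 \<pi> d k i a b u v s \<omega>) = vadd (Xf a \<omega>) (spread \<pi> d k i u) \<and>
        Yf i0 j0 b (T1 \<pi> d k i a b u v s \<omega>) = vadd (Yf i0 j0 b \<omega>) (spread \<pi> d k i v) \<and>
        Zf (T1 \<pi> d k i a b u v s \<omega>) = (Zf \<omega>)[i-1 := vadd (Zf \<omega> ! (i-1)) s]"
proof -
  obtain L1 L2 e zs where w: "\<omega> = (L1, L2, e, zs)" by (cases \<omega>) auto
  have h: "length L1 = N" "set L1 \<subseteq> vecs d" "length L2 = N" "set L2 \<subseteq> vecs d" "length zs = r" "set zs \<subseteq> vecs k"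
    "e \<in> vecs d" "wt e = g"
    using \<omega> unfolding w OM_def by auto
  have la: "length (L1 ! a) = d" using nth_in_vecs[OF h(2)] h(1) ab by simp
  have lb: "length (L2 ! b) = d" using nth_in_vecs[OF h(4)] h(3) ab by simp
  have lz: "length (zs ! (i-1)) = k" using nth_in_vecs[OF h(6)] h(5) i by simp
  have lu: "length s = k" using uvs by (simp add: vecs_def)
  define L1' where "L1' = L1[a := vadd (L1 ! a) (spread \<pi> d k i u)]"
  define L2' where "L2' = L2[b := vadd (L2 ! b) (spread \<pi> d k i v)]"
  define zs' where "zs' = zs[i-1 := vadd (zs ! (i-1)) s]"
  have Tw: "T1 \<pi> d k i a b u v s \<omega> = (L1', L2', e, zs')" unfolding w T1_def L1'_def L2'_def zs'_def by simp
  have "L1' \<in> {L. length L = N \<and> set L \<subseteq> vecs d}" unfolding L1'_def using h la set_update_vecs by simp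
  moreover have "L2' \<in> {L. length L = N \<and> set L \<subseteq> vecs d}" unfolding L2'_def using h lb set_update_vecs by simp
  moreover have "zs' \<in> {L. length L = r \<and> set L \<subseteq> vecs k}" unfolding zs'_def using h lz lu set_update_vecs by simp
  ultimately have 1: "T1 \<pi> d k i a b u v s \<omega> \<in> OM N d g r k" unfolding Tw OM_def using h by simp
  have "L1'[a := vadd (L1' ! a) (spread \<pi> d k i u)] = L1" unfolding L1'_def using la h(1) ab by (simp add: vadd_cancel)
  moreover have "L2'[b := vadd (L2' ! b) (spread \<pi> d k i v)] = L2" unfolding L2'_def using lb h(3) ab by (simp add: vadd_cancel)
  moreover have "zs'[i-1 := vadd (zs' ! (i-1)) s] = zs" unfolding zs'_def using lz lu h(5) i by (simp add: vadd_cancel)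
  ultimately have 2: "T1 \<pi> d k i a b u v s (T1 \<pi> d k i a b u v s \<omega>) = \<omega>" unfolding Tw unfolding w T1_def by simp
  have 3: "Xf a (T1 \<pi> d k i a b u v s \<omega>) = vadd (Xf a \<omega>) (spread \<pi> d k i u)"
    unfolding Tw Xf_def L1'_def using h(1) ab by (simp add: w)
  have 4: "Yf i0 j0 b (T1 \<pi> d k i a b u v s \<omega>) = vadd (Yf i0 j0 b \<omega>) (spread \<pi> d k i v)"
    unfolding Tw Yf_def L2'_def using h(3) ab by (simp add: w)
  have 5: "Zf (T1 \<pi> d k i a b u v s \<omega>) = (Zf \<omega>)[i-1 := vadd (Zf \<omega> ! (i-1)) s]"
    unfolding Tw Zf_def zs'_def by (simp add: w)
  show ?thesis using 1 2 3 4 5 by blast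
qed

lemma T2_props:
  assumes \<omega>: "\<omega> \<in> OM N d g r k" and ab: "a < N" "i0 < N" "a \<noteq> i0" "j0 < N" and i: "0 < i" "i \<le> r"
    and uvs: "u \<in> vecs k" "v \<in> vecs k" "s \<in> vecs k"
  shows "T2 \<pi> d k i a i0 u v s \<omega> \<in> OM N d g r k \<and> T2 \<pi> d k i a i0 u v s (T2 \<pi> d k i a i0 u v s \<omega>) = \<omega> \<and>
        Xf a (T2 \<pi> d k i a i0 u v s \<omega>) = vadd (Xf a \<omega>) (spread \<pi> d k i u) \<and>
        Yf i0 j0 j0 (T2 \<pi> d k i a i0 u v s \<omega>) = vadd (Yf i0 j0 j0 \<omega>) (spread \<pi> d k i v) \<and>
        Zf (T2 \<pi> d k i a i0 u v s \<omega>) = (Zf \<omega>)[i-1 := vadd (Zf \<omega> ! (i-1)) s]"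
proof -
  obtain L1 L2 e zs where w: "\<omega> = (L1, L2, e, zs)" by (cases \<omega>) auto
  have h: "length L1 = N" "set L1 \<subseteq> vecs d" "length L2 = N" "set L2 \<subseteq> vecs d" "length zs = r" "set zs \<subseteq> vecs k"
    "e \<in> vecs d" "wt e = g"
    using \<omega> unfolding w OM_def by auto
  have la: "length (L1 ! a) = d" using nth_in_vecs[OF h(2)] h(1) ab by simp
  have lb: "length (L1 ! i0) = d" using nth_in_vecs[OF h(2)] h(1) ab by simp
  have le: "length e = d" using h(7) by (simp add: vecs_def)
  have lz: "length (zs ! (i-1)) = k" using nth_in_vecs[OF h(6)] h(5) i by simp
  have lu: "length s = k" using uvs by (simp add: vecs_def)
  define L1' where "L1' = L1[a := vadd (L1 ! a) (spread \<pi> d k i u), i0 := vadd (L1 ! i0) (spread \<pi> d k i v)]"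
  define zs' where "zs' = zs[i-1 := vadd (zs ! (i-1)) s]"
  have Tw: "T2 \<pi> d k i a i0 u v s \<omega> = (L1', L2, e, zs')" unfolding w T2_def L1'_def zs'_def by simp
  have "L1' \<in> {L. length L = N \<and> set L \<subseteq> vecs d}" unfolding L1'_def using h la lb set_update_vecs by simp
  moreover have "zs' \<in> {L. length L = r \<and> set L \<subseteq> vecs k}" unfolding zs'_def using h lz lu set_update_vecs by simp
  ultimately have 1: "T2 \<pi> d k i a i0 u v s \<omega> \<in> OM N d g r k" unfolding Tw OM_def using h by simp
  have a1: "L1' ! a = vadd (L1 ! a) (spread \<pi> d k i u)" unfolding L1'_def using ab h(1) by simp
  have a2: "L1' ! i0 = vadd (L1 ! i0) (spread \<pi> d k i v)" unfolding L1'_def using ab h(1) by simp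
  have "L1'[a := vadd (L1' ! a) (spread \<pi> d k i u), i0 := vadd (L1' ! i0) (spread \<pi> d k i v)] = L1"
    unfolding a1 a2 using la lb h(1) ab by (simp add: vadd_cancel L1'_def list_update_swap[of a i0])
  moreover have "zs'[i-1 := vadd (zs' ! (i-1)) s] = zs" unfolding zs'_def using lz lu h(5) i by (simp add: vadd_cancel)
  ultimately have 2: "T2 \<pi> d k i a i0 u v s (T2 \<pi> d k i a i0 u v s \<omega>) = \<omega>" unfolding Tw unfolding w T2_def by simp
  have 3: "Xf a (T2 \<pi> d k i a i0 u v s \<omega>) = vadd (Xf a \<omega>) (spread \<pi> d k i u)"
    unfolding Tw Xf_def using a1 by (simp add: w)
  have 4: "Yf i0 j0 j0 (T2 \<pi> d k i a i0 u v s \<omega>) = vadd (Yf i0 j0 j0 \<omega>) (spread \<pi> d k i v)"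
    unfolding Tw Yf_def using h(3) ab a2 lb le by (simp add: vadd_swap w)
  have 5: "Zf (T2 \<pi> d k i a i0 u v s \<omega>) = (Zf \<omega>)[i-1 := vadd (Zf \<omega> ! (i-1)) s]"
    unfolding Tw Zf_def zs'_def by (simp add: w)
  show ?thesis using 1 2 3 4 5 by blast
qed

lemma lens_OM:
  assumes \<omega>: "\<omega> \<in> OM N d g r k" and ab: "a < N" "b < N" "i0 < N"
  shows "length (Xf a \<omega>) = d \<and> length (Yf i0 j0 b \<omega>) = d \<and> length (Zf \<omega>) = r \<and> set (Zf \<omega>) \<subseteq> vecs k"
proof -
  obtain L1 L2 e zs where w: "\<omega> = (L1, L2, e, zs)" by (cases \<omega>) auto
  have h: "length L1 = N" "set L1 \<subseteq> vecs d" "length L2 = N" "set L2 \<subseteq> vecs d" "length zs = r" "set zs \<subseteq> vecs k"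
    "e \<in> vecs d" "wt e = g"
    using \<omega> unfolding w OM_def by auto
  have la: "length (L1 ! a) = d" using nth_in_vecs[OF h(2)] h(1) ab by simp
  have lb: "length (L2 ! b) = d" using nth_in_vecs[OF h(4)] h(3) ab by simp
  have lc: "length (L1 ! i0) = d" using nth_in_vecs[OF h(2)] h(1) ab by simp
  have le: "length e = d" using h(7) by (simp add: vecs_def)
  have "length (Yf i0 j0 b \<omega>) = d" unfolding Yf_def w using lb lc le h(3) ab
    by (cases "b = j0") auto
  thus ?thesis unfolding Xf_def Zf_def w using la h by simp
qed

definition Qs :: "(nat \<Rightarrow> nat) \<Rightarrow> nat \<Rightarrow> nat \<Rightarrow> nat \<Rightarrow> nat \<Rightarrow> om set \<Rightarrow> nat \<Rightarrow> nat \<times> nat \<Rightarrow> om set" where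
  "Qs \<pi> k w i0 j0 \<Omega> i p = {\<omega>\<in>\<Omega>. \<forall>l\<in>{1..i}. pass \<pi> k w l (Xf (fst p) \<omega>) (Zf \<omega>) \<and> pass \<pi> k w l (Yf i0 j0 (snd p) \<omega>) (Zf \<omega>)}"

lemma finite_OM: "finite (OM N d g r k)"
proof -
  have "finite {L. set L \<subseteq> vecs d \<and> length L = N}" by (rule finite_lists_length_eq) simp
  moreover have "finite {L. set L \<subseteq> vecs k \<and> length L = r}" by (rule finite_lists_length_eq) simp
  ultimately show ?thesis unfolding OM_def by (simp add: conj_commute)
qed

lemma step_count:
  assumes p: "\<pi> permutes {..<d}" and i: "0 < i" "i \<le> r" and rk: "r * k \<le> d"
    and ab: "a < N" "b < N" "i0 < N" "j0 < N" "(a, b) \<noteq> (i0, j0)"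
  shows "card (Qs \<pi> k w i0 j0 (OM N d g r k) i (a,b)) * 2 ^ (2*k)
       = card (Qs \<pi> k w i0 j0 (OM N d g r k) (i-1) (a,b)) * (k choose w) ^ 2"
proof (cases "b = j0")
  case False
  show ?thesis unfolding Qs_def fst_conv snd_conv
    by (rule core[OF p i rk finite_OM, where T = "T1 \<pi> d k i a b"])
       (use lens_OM[OF _ ab(1,2,3)] T1_props[OF _ ab(1,2) False i] in auto)
next
  case True
  hence a: "a \<noteq> i0" using ab by simp
  show ?thesis unfolding Qs_def fst_conv snd_conv True
    by (rule core[OF p i rk finite_OM, where T = "T2 \<pi> d k i a i0"])
       (use lens_OM[OF _ ab(1,4,3)] T2_props[OF _ ab(1,3) a ab(4) i] in auto)
qed



definition hmap :: "nat \<Rightarrow> nat \<Rightarrow> om \<Rightarrow> (bool list list \<times> bool list list) \<times> bool list list" where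
  "hmap i0 j0 \<omega> = ((fst \<omega>, (fst (snd \<omega>))[j0 := vadd (fst \<omega> ! i0) (fst (snd (snd \<omega>)))]), snd (snd (snd \<omega>)))"

lemma ne_lists: "{L. length L = N \<and> set L \<subseteq> vecs d} \<noteq> {}"
proof -
  have "replicate N (replicate d False) \<in> {L. length L = N \<and> set L \<subseteq> vecs d}"
    by (auto simp: vecs_def)
  thus ?thesis by blast
qed

lemma fin_lists: "finite {L. length L = N \<and> set L \<subseteq> vecs d}"
proof -
  have "finite {L. set L \<subseteq> vecs d \<and> length L = N}" by (rule finite_lists_length_eq) simp
  thus ?thesis by (simp add: conj_commute)
qed

lemma ne_UE: "g \<le> d \<Longrightarrow> {e \<in> vecs d. wt e = g} \<noteq> {}"
proof -
  assume "g \<le> d"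
  hence "replicate g True @ replicate (d - g) False \<in> {e \<in> vecs d. wt e = g}"
    by (simp add: vecs_def wt_def)
  thus ?thesis by blast
qed

lemma fin_UE: "finite {e \<in> vecs d. wt e = g}" by simp

lemma ne_OM: assumes "g \<le> d" shows "OM N d g r k \<noteq> {}"
proof -
  obtain x where x: "x \<in> {L. length L = N \<and> set L \<subseteq> vecs d}" using ne_lists[of N d] by blast
  obtain z where z: "z \<in> {L. length L = r \<and> set L \<subseteq> vecs k}" using ne_lists[of r k] by blast
  obtain e where e: "e \<in> {e \<in> vecs d. wt e = g}" using ne_UE[OF assms] by blast
  have "(x, x, e, z) \<in> OM N d g r k" unfolding OM_def using x z e by blast
  thus ?thesis by blast
qed

lemma ne_times: "A \<noteq> {} \<Longrightarrow> B \<noteq> {} \<Longrightarrow> A \<times> B \<noteq> {}" by auto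

lemma Q_eq:
  assumes "g \<le> d"
  shows "pair_pmf (CP_instance d N g i0 j0) (uniform_list r k) = map_pmf (hmap i0 j0) (pmf_of_set (OM N d g r k))"
proof -
  have "pmf_of_set (OM N d g r k) = pair_pmf (pmf_of_set {L. length L = N \<and> set L \<subseteq> vecs d})
     (pair_pmf (pmf_of_set {L. length L = N \<and> set L \<subseteq> vecs d})
       (pair_pmf (pmf_of_set {e \<in> vecs d. wt e = g}) (pmf_of_set {L. length L = r \<and> set L \<subseteq> vecs k})))"
  proof -
    let ?A = "{L. length L = N \<and> set L \<subseteq> vecs d}"
    let ?E = "{e \<in> vecs d. wt e = g}"
    let ?Z = "{L. length L = r \<and> set L \<subseteq> vecs k}"
    have e1: "pmf_of_set (?E \<times> ?Z) = pair_pmf (pmf_of_set ?E) (pmf_of_set ?Z)"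
      by (rule pmf_of_set_times[OF fin_UE ne_UE[OF assms] fin_lists ne_lists])
    have e2: "pmf_of_set (?A \<times> (?E \<times> ?Z)) = pair_pmf (pmf_of_set ?A) (pmf_of_set (?E \<times> ?Z))"
      by (rule pmf_of_set_times[OF fin_lists ne_lists finite_cartesian_product[OF fin_UE fin_lists] ne_times[OF ne_UE[OF assms] ne_lists]])
    have e3: "pmf_of_set (?A \<times> (?A \<times> (?E \<times> ?Z))) = pair_pmf (pmf_of_set ?A) (pmf_of_set (?A \<times> (?E \<times> ?Z)))"
      by (rule pmf_of_set_times[OF fin_lists ne_lists finite_cartesian_product[OF fin_lists finite_cartesian_product[OF fin_UE fin_lists]] ne_times[OF ne_lists ne_times[OF ne_UE[OF assms] ne_lists]]])
    show ?thesis unfolding OM_def e3 e2 e1 ..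
  qed
  thus ?thesis unfolding CP_instance_def uniform_list_def
    by (simp add: pair_pmf_def map_pmf_def bind_assoc_pmf bind_return_pmf hmap_def)
qed

lemma double_count:
  assumes "finite A" "finite B" "\<And>p. p \<in> B \<Longrightarrow> S p \<subseteq> A"
  shows "(\<Sum>x\<in>A. card {p\<in>B. x \<in> S p}) = (\<Sum>p\<in>B. card (S p))"
proof -
  have c: "card {p\<in>B. x \<in> S p} = (\<Sum>p\<in>B. if x \<in> S p then 1 else 0)" for x
  proof -
    have "card {p\<in>B. x \<in> S p} = (\<Sum>p\<in>{p\<in>B. x \<in> S p}. 1)" by simp
    also have "\<dots> = (\<Sum>p\<in>B. if x \<in> S p then 1 else 0)" by (rule sum.inter_filter) (rule assms(2))
    finally show ?thesis .
  qed
  have d: "card (S p) = (\<Sum>x\<in>A. if x \<in> S p then 1 else 0)" if "p \<in> B" for p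
  proof -
    have "S p = {x\<in>A. x \<in> S p}" using assms(3)[OF that] by blast
    hence "card (S p) = (\<Sum>x\<in>{x\<in>A. x \<in> S p}. 1)" by simp
    also have "\<dots> = (\<Sum>x\<in>A. if x \<in> S p then 1 else 0)" by (rule sum.inter_filter) (rule assms(1))
    finally show ?thesis .
  qed
  have "(\<Sum>x\<in>A. card {p\<in>B. x \<in> S p}) = (\<Sum>x\<in>A. \<Sum>p\<in>B. if x \<in> S p then 1 else (0::nat))"
    by (simp only: c)
  also have "\<dots> = (\<Sum>p\<in>B. \<Sum>x\<in>A. if x \<in> S p then 1 else 0)" by (rule sum.swap)
  also have "\<dots> = (\<Sum>p\<in>B. card (S p))" by (rule sum.cong[OF refl]) (simp add: d)
  finally show ?thesis .
qed

lemma F_hmap: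
  assumes \<omega>: "\<omega> \<in> OM N d g r k" and i0: "i0 < N"
  shows "card (fst (node \<pi> k w (fst (fst (hmap i0 j0 \<omega>))) (snd (fst (hmap i0 j0 \<omega>))) (snd (hmap i0 j0 \<omega>)) i))
       * card (snd (node \<pi> k w (fst (fst (hmap i0 j0 \<omega>))) (snd (fst (hmap i0 j0 \<omega>))) (snd (hmap i0 j0 \<omega>)) i))
       = card {p \<in> {..<N} \<times> {..<N}. \<omega> \<in> Qs \<pi> k w i0 j0 (OM N d g r k) i p}"
proof -
  obtain L1 L2 e zs where w: "\<omega> = (L1, L2, e, zs)" by (cases \<omega>) auto
  have h: "length L1 = N" "length L2 = N" using \<omega> unfolding w OM_def by auto
  define A where "A = {a \<in> {..<N}. \<forall>l\<in>{1..i}. pass \<pi> k w l (Xf a \<omega>) (Zf \<omega>)}"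
  define B where "B = {b \<in> {..<N}. \<forall>l\<in>{1..i}. pass \<pi> k w l (Yf i0 j0 b \<omega>) (Zf \<omega>)}"
  have n: "node \<pi> k w (fst (fst (hmap i0 j0 \<omega>))) (snd (fst (hmap i0 j0 \<omega>))) (snd (hmap i0 j0 \<omega>)) i = (A, B)"
    unfolding node_char A_def B_def hmap_def w Xf_def Yf_def Zf_def using h by simp
  have AB: "A \<times> B = {p \<in> {..<N} \<times> {..<N}. \<omega> \<in> Qs \<pi> k w i0 j0 (OM N d g r k) i p}"
    unfolding A_def B_def Qs_def using \<omega> by auto
  show ?thesis unfolding n fst_conv snd_conv card_cartesian_product[symmetric] AB by (rule refl)
qed

lemma expected_eq:
  assumes "g \<le> d" "i0 < N"
  shows "expected_prod d N g i0 j0 \<pi> k w r i =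
     (\<Sum>p\<in>{..<N} \<times> {..<N}. real (card (Qs \<pi> k w i0 j0 (OM N d g r k) i p))) / real (card (OM N d g r k))"
proof -
  let ?O = "OM N d g r k"
  let ?F = "\<lambda>((L1, L2), zs). real (card (fst (node \<pi> k w L1 L2 zs i)) * card (snd (node \<pi> k w L1 L2 zs i)))"
  have "expected_prod d N g i0 j0 \<pi> k w r i = measure_pmf.expectation (pmf_of_set ?O) (\<lambda>\<omega>. ?F (hmap i0 j0 \<omega>))"
    unfolding expected_prod_def Q_eq[OF assms(1)] by simp
  also have "\<dots> = (\<Sum>\<omega>\<in>?O. ?F (hmap i0 j0 \<omega>)) / card ?O"
    by (rule integral_pmf_of_set[OF ne_OM[OF assms(1)] finite_OM])
  also have "(\<Sum>\<omega>\<in>?O. ?F (hmap i0 j0 \<omega>)) = (\<Sum>\<omega>\<in>?O. real (card {p \<in> {..<N} \<times> {..<N}. \<omega> \<in> Qs \<pi> k w i0 j0 ?O i p}))"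
  proof (rule sum.cong[OF refl])
    fix \<omega> assume "\<omega> \<in> ?O"
    note H = F_hmap[OF this assms(2), of \<pi> w j0 i]
    show "?F (hmap i0 j0 \<omega>) = real (card {p \<in> {..<N} \<times> {..<N}. \<omega> \<in> Qs \<pi> k w i0 j0 ?O i p})"
      unfolding case_prod_beta H by (rule refl)
  qed
  also have "\<dots> = real (\<Sum>\<omega>\<in>?O. card {p \<in> {..<N} \<times> {..<N}. \<omega> \<in> Qs \<pi> k w i0 j0 ?O i p})" by simp
  also have "(\<Sum>\<omega>\<in>?O. card {p \<in> {..<N} \<times> {..<N}. \<omega> \<in> Qs \<pi> k w i0 j0 ?O i p})
      = (\<Sum>p\<in>{..<N} \<times> {..<N}. card (Qs \<pi> k w i0 j0 ?O i p))"
    by (rule double_count) (auto simp: finite_OM Qs_def)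
  finally show ?thesis by simp
qed



theorem mainTheorem6:
  fixes d r k N g w i0 j0 :: nat and lam \<gamma> \<delta> :: real and \<pi> :: "nat \<Rightarrow> nat"
  assumes "0 < r" and "r dvd d" and "k = d div r"
    and "\<delta> * real k = real w"
    and "real N = 2 powr (lam * real d)"
    and "\<gamma> * real d = real g" and "g \<le> d"
    and "i0 < N" and "j0 < N"
    and "\<pi> permutes {..<d}"
  shows "(\<forall>i \<in> {1..r}. expected_prod d N g i0 j0 \<pi> k w r i
            \<le> expected_prod d N g i0 j0 \<pi> k w r (i - 1) * (real (k choose w) / 2 ^ k) ^ 2 + 1)
       \<and> expected_prod d N g i0 j0 \<pi> k w r r
            \<le> 2 powr (2 * lam * real d) * (real (k choose w) / 2 ^ k) ^ (2 * r) + real r"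
proof -
  note gd = assms(7) and i0N = assms(8) and j0N = assms(9) and p = assms(10)
  define Om where "Om = OM N d g r k"
  define P where "P = {..<N} \<times> {..<N}"
  define q where "q = (real (k choose w) / 2 ^ k) ^ 2"
  define S where "S i = (\<Sum>p\<in>P. real (card (Qs \<pi> k w i0 j0 Om i p)))" for i
  define EP where "EP i = expected_prod d N g i0 j0 \<pi> k w r i" for i
  have EPS: "EP i = S i / real (card Om)" for i
    unfolding EP_def S_def Om_def P_def by (rule expected_eq[OF gd i0N])
  have rk: "r * k \<le> d" using assms(2,3) by simp
  have finO: "finite Om" unfolding Om_def by (rule finite_OM)
  have neO: "Om \<noteq> {}" unfolding Om_def by (rule ne_OM[OF gd])
  have cO: "0 < real (card Om)" using finO neO by (simp add: card_gt_0_iff)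
  have finP: "finite P" unfolding P_def by simp
  have p0: "(i0, j0) \<in> P" unfolding P_def using i0N j0N by simp
  have q0: "0 \<le> q" unfolding q_def by simp
  have q1: "q \<le> 1"
  proof -
    have "real (k choose w) \<le> 2 ^ k" using binomial_le_pow2[of k w] by (simp add: of_nat_le_iff[symmetric])
    hence "real (k choose w) / 2 ^ k \<le> 1" by simp
    moreover have "0 \<le> real (k choose w) / 2 ^ k" by simp
    ultimately show ?thesis unfolding q_def by (simp add: power_le_one)
  qed
  have qeq: "q = real (k choose w) ^ 2 / 2 ^ (2 * k)"
    unfolding q_def by (simp add: power_divide power_mult[symmetric] mult.commute)
  have step: "S i \<le> q * S (i - 1) + real (card Om)" if i: "i \<in> {1..r}" for i
  proof -
    have i': "0 < i" "i \<le> r" using i by auto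
    have eqp: "real (card (Qs \<pi> k w i0 j0 Om i p)) = q * real (card (Qs \<pi> k w i0 j0 Om (i-1) p))"
      if pP: "p \<in> P - {(i0, j0)}" for p
    proof -
      obtain a b where ab: "p = (a, b)" by (cases p) auto
      have ab': "a < N" "b < N" "(a, b) \<noteq> (i0, j0)" using pP unfolding ab P_def by auto
      have "card (Qs \<pi> k w i0 j0 Om i p) * 2 ^ (2*k) = card (Qs \<pi> k w i0 j0 Om (i-1) p) * (k choose w) ^ 2"
        unfolding ab Om_def by (rule step_count[OF p i' rk ab'(1,2) i0N j0N ab'(3)])
      hence "real (card (Qs \<pi> k w i0 j0 Om i p)) * 2 ^ (2*k) = real (card (Qs \<pi> k w i0 j0 Om (i-1) p)) * real (k choose w) ^ 2"
        by (metis (mono_tags) of_nat_mult of_nat_power of_nat_numeral)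
      thus ?thesis unfolding qeq by (simp add: field_simps)
    qed
    have "S i = (\<Sum>p\<in>P - {(i0, j0)}. real (card (Qs \<pi> k w i0 j0 Om i p))) + real (card (Qs \<pi> k w i0 j0 Om i (i0, j0)))"
      unfolding S_def using sum.remove[OF finP p0, of "\<lambda>p. real (card (Qs \<pi> k w i0 j0 Om i p))"] by linarith
    also have "(\<Sum>p\<in>P - {(i0, j0)}. real (card (Qs \<pi> k w i0 j0 Om i p))) = q * (\<Sum>p\<in>P - {(i0, j0)}. real (card (Qs \<pi> k w i0 j0 Om (i-1) p)))"
      by (simp add: eqp sum_distrib_left)
    also have "(\<Sum>p\<in>P - {(i0, j0)}. real (card (Qs \<pi> k w i0 j0 Om (i-1) p))) \<le> S (i - 1)"
      unfolding S_def using sum.remove[OF finP p0, of "\<lambda>p. real (card (Qs \<pi> k w i0 j0 Om (i-1) p))"] by simp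
    also have "real (card (Qs \<pi> k w i0 j0 Om i (i0, j0))) \<le> real (card Om)"
      unfolding Qs_def using finO by (simp add: card_mono)
    finally show ?thesis using q0 by (simp add: mult_left_mono)
  qed
  have part1: "\<forall>i\<in>{1..r}. EP i \<le> EP (i - 1) * q + 1"
  proof
    fix i assume i: "i \<in> {1..r}"
    have "EP i = S i / real (card Om)" by (rule EPS)
    also have "\<dots> \<le> (q * S (i - 1) + real (card Om)) / real (card Om)"
      using step[OF i] cO by (simp add: divide_right_mono)
    also have "\<dots> = EP (i - 1) * q + 1" unfolding EPS using cO by (simp add: field_simps)
    finally show "EP i \<le> EP (i - 1) * q + 1" .
  qed
  have EP0: "EP 0 = real N ^ 2"
  proof -
    have "Qs \<pi> k w i0 j0 Om 0 p = Om" for p unfolding Qs_def by simp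
    hence "S 0 = real (card P) * real (card Om)" unfolding S_def by simp
    moreover have "card P = N * N" unfolding P_def by (simp add: card_cartesian_product)
    ultimately show ?thesis unfolding EPS using cO by (simp add: power2_eq_square)
  qed
  have bound: "EP j \<le> real N ^ 2 * q ^ j + real j" if "j \<le> r" for j
    using that
  proof (induction j)
    case 0 thus ?case using EP0 by simp
  next
    case (Suc j)
    have sj: "Suc j \<in> {1..r}" using Suc.prems by simp
    have "EP (Suc j) \<le> EP j * q + 1" using bspec[OF part1 sj] by simp
    also have "\<dots> \<le> (real N ^ 2 * q ^ j + real j) * q + 1"
      using Suc.IH Suc.prems q0 by (simp add: mult_right_mono)
    also have "\<dots> \<le> real N ^ 2 * q ^ Suc j + real (Suc j)"
    proof -
      have "real j * q \<le> real j" using q1 by (simp add: mult_left_le)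
      thus ?thesis by (simp add: algebra_simps)
    qed
    finally show ?case .
  qed
  have N2: "real N ^ 2 = 2 powr (2 * lam * real d)"
  proof -
    have "real N ^ 2 = 2 powr (lam * real d) * 2 powr (lam * real d)" using assms(5) by (simp add: power2_eq_square)
    also have "\<dots> = 2 powr (2 * lam * real d)" by (simp add: powr_add[symmetric] mult.assoc)
    finally show ?thesis .
  qed
  have qr: "q ^ r = (real (k choose w) / 2 ^ k) ^ (2 * r)" unfolding q_def by (simp add: power_mult)
  show ?thesis using part1 bound[of r] N2 qr unfolding EP_def q_def by simp
qed


end
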